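(* Let $k$ be a field of characteristic $0$, let $S$ be a simple extension of $k$ of degree $n$, and let $c$ be a primitive element of $S/k$. Let $q$ be a regular quadratic form over $k$ of rank $m$ and let $x=(x^{(1)},\dots,x^{(m)})\in S^m$ satisfy $q(x)\neq 0$. Let $V_c=\{b\in S^*\mid cb^2\text{ is a primitive element of }S/k\}$. Then the set $$U_{c,x,q}=\{b\in V_c\mid q(\{xb^{-1},cb^2\})\neq 0\}$$ is non-empty and open in $S^*$, where for $b\in V_c$ we write $\{xb^{-1},cb^2\}=(\{x^{(1)}b^{-1},cb^2\},\dots,\{x^{(m)}b^{-1},cb^2\})\in k^m$.
   Context: A $k$-algebra $S$ is a simple extension of degree $n$ of the field $k$ if there is $c\in S^*$ (a primitive element) such that $1,c,\dots,c^{n-1}$ is a $k$-basis of $S$. For a primitive element $d$ and $y\in S$, $\{y,d\}$ denotes the coefficient $y_{n-1}$ in the unique expression $y=\sum_{i=0}^{n-1}y_i d^i$ with $y_i\in k$. $S$ is identified with $\mathbb{A}^n(k)$ via a $k$-basis and given the Zariski topology; $S^*$ carries the subspace topology. *)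

theory Defs
  imports Main "HOL.Vector_Spaces"
begin

definition k_algebra :: "('a::field \<Rightarrow> 'b::comm_ring_1 \<Rightarrow> 'b) \<Rightarrow> bool" where
  "k_algebra scale \<longleftrightarrow> vector_space scale \<and>
     (\<forall>a x y. scale a (x * y) = scale a x * y)"

definition units :: "'b::comm_ring_1 set" where
  "units = {b. b dvd 1}"

definition uinv :: "'b::comm_ring_1 \<Rightarrow> 'b" where
  "uinv b = (THE y. b * y = 1)"

definition primitive :: "('a::field \<Rightarrow> 'b::comm_ring_1 \<Rightarrow> 'b) \<Rightarrow> nat \<Rightarrow> 'b \<Rightarrow> bool" where
  "primitive scale n c \<longleftrightarrow> c \<in> units \<and> inj_on (\<lambda>i. c ^ i) {..<n} \<and>
     \<not> module.dependent scale ((\<lambda>i. c ^ i) ` {..<n}) \<and>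
     module.span scale ((\<lambda>i. c ^ i) ` {..<n}) = UNIV"

definition pcoords :: "('a::field \<Rightarrow> 'b::comm_ring_1 \<Rightarrow> 'b) \<Rightarrow> nat \<Rightarrow> 'b \<Rightarrow> 'b \<Rightarrow> (nat \<Rightarrow> 'a)" where
  "pcoords scale n d y = (THE ys. (\<forall>i\<ge>n. ys i = 0) \<and> y = (\<Sum>i<n. scale (ys i) (d ^ i)))"

text \<open>{y, d}: the coefficient y_(n-1) of the expansion of y in powers of d.\<close>
definition top_coeff :: "('a::field \<Rightarrow> 'b::comm_ring_1 \<Rightarrow> 'b) \<Rightarrow> nat \<Rightarrow> 'b \<Rightarrow> 'b \<Rightarrow> 'a" where
  "top_coeff scale n y d = pcoords scale n d y (n - 1)"

inductive_set poly_fun :: "((nat \<Rightarrow> 'a::comm_ring_1) \<Rightarrow> 'a) set" where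
  pf_const: "(\<lambda>v. a) \<in> poly_fun"
| pf_var: "(\<lambda>v. v i) \<in> poly_fun"
| pf_add: "p \<in> poly_fun \<Longrightarrow> q \<in> poly_fun \<Longrightarrow> (\<lambda>v. p v + q v) \<in> poly_fun"
| pf_mult: "p \<in> poly_fun \<Longrightarrow> q \<in> poly_fun \<Longrightarrow> (\<lambda>v. p v * q v) \<in> poly_fun"

text \<open>Zariski-open subsets of S, where S is identified with k^n via the k-basis
  1, c, ..., c^(n-1): complements of common zero sets of sets of polynomials.\<close>
definition zariski_open :: "('a::field \<Rightarrow> 'b::comm_ring_1 \<Rightarrow> 'b) \<Rightarrow> nat \<Rightarrow> 'b \<Rightarrow> 'b set \<Rightarrow> bool" where
  "zariski_open scale n c W \<longleftrightarrow>
     (\<exists>P \<subseteq> poly_fun. W = {y. \<exists>p\<in>P. p (pcoords scale n c y) \<noteq> 0})"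

definition open_in_units :: "('a::field \<Rightarrow> 'b::comm_ring_1 \<Rightarrow> 'b) \<Rightarrow> nat \<Rightarrow> 'b \<Rightarrow> 'b set \<Rightarrow> bool" where
  "open_in_units scale n c U \<longleftrightarrow> (\<exists>W. zariski_open scale n c W \<and> U = W \<inter> units)"

definition qform :: "(nat \<Rightarrow> nat \<Rightarrow> 'a::comm_ring_1) \<Rightarrow> nat \<Rightarrow> (nat \<Rightarrow> 'a) \<Rightarrow> 'a" where
  "qform Q m v = (\<Sum>i<m. \<Sum>j<m. Q i j * v i * v j)"

definition regular_qform :: "(nat \<Rightarrow> nat \<Rightarrow> 'a::field) \<Rightarrow> nat \<Rightarrow> bool" where
  "regular_qform Q m \<longleftrightarrow>
     (\<forall>v. (\<forall>w. qform Q m (\<lambda>i. v i + w i) - qform Q m v - qform Q m w = 0)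
          \<longrightarrow> (\<forall>i<m. v i = 0))"

text \<open>The quadratic form evaluated on S^m (extension of scalars).\<close>
definition qformS :: "('a::field \<Rightarrow> 'b::comm_ring_1 \<Rightarrow> 'b) \<Rightarrow> (nat \<Rightarrow> nat \<Rightarrow> 'a) \<Rightarrow> nat \<Rightarrow> (nat \<Rightarrow> 'b) \<Rightarrow> 'b" where
  "qformS scale Q m x = (\<Sum>i<m. \<Sum>j<m. scale (Q i j) (x i * x j))"

end

theory Submission
  imports Defs "Jordan_Normal_Form.Determinant" "HOL-Computational_Algebra.Polynomial"
begin

lemma prim_n_pos:
  assumes vs: "vector_space scale" and p: "primitive scale n d"
  shows "n > 0"
proof (rule ccontr)
  interpret vector_space scale by fact
  assume "\<not> n > 0"
  then have "n = 0" by simp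
  with p have "span {} = (UNIV::'b set)" unfolding primitive_def by simp
  then have "(1::'b) \<in> span {}" by simp
  then show False by simp
qed

lemma prim_indep:
  assumes vs: "vector_space scale" and p: "primitive scale n d"
    and s: "(\<Sum>i<n. scale (v i) (d ^ i)) = 0" and i: "i < n"
  shows "v i = 0"
proof -
  interpret vector_space scale by fact
  let ?S = "(\<lambda>i. d ^ i) ` {..<n}"
  have inj: "inj_on (\<lambda>i. d ^ i) {..<n}" and nd: "\<not> dependent ?S"
    using p unfolding primitive_def by auto
  define u where "u w = v (the_inv_into {..<n} (\<lambda>i. d ^ i) w)" for w
  have uu: "u (d ^ j) = v j" if "j < n" for j
    unfolding u_def using the_inv_into_f_f[OF inj] that by simp
  have "(\<Sum>w\<in>?S. scale (u w) w) = (\<Sum>j<n. scale (u (d ^ j)) (d ^ j))"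
    by (subst sum.reindex[OF inj]) simp
  also have "\<dots> = (\<Sum>j<n. scale (v j) (d ^ j))" by (rule sum.cong) (auto simp: uu)
  finally have "(\<Sum>w\<in>?S. scale (u w) w) = 0" using s by simp
  with nd dependent_finite[of ?S] have "\<forall>w\<in>?S. u w = 0" by auto
  then have "u (d ^ i) = 0" using i by auto
  then show ?thesis using uu[OF i] by simp
qed

lemma prim_span:
  assumes vs: "vector_space scale" and p: "primitive scale n d"
  shows "\<exists>v. y = (\<Sum>i<n. scale (v i) (d ^ i))"
proof -
  interpret vector_space scale by fact
  let ?S = "(\<lambda>i. d ^ i) ` {..<n}"
  have inj: "inj_on (\<lambda>i. d ^ i) {..<n}" and sp: "span ?S = UNIV"
    using p unfolding primitive_def by auto
  have "y \<in> span ?S" using sp by simp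
  then obtain u where "y = (\<Sum>w\<in>?S. scale (u w) w)" using span_finite[of ?S] by auto
  also have "\<dots> = (\<Sum>j<n. scale (u (d ^ j)) (d ^ j))"
    by (subst sum.reindex[OF inj]) simp
  finally show ?thesis by (intro exI[of _ "\<lambda>j. u (d ^ j)"])
qed

lemma prim_unique:
  assumes vs: "vector_space scale" and p: "primitive scale n d"
    and "(\<Sum>i<n. scale (v i) (d ^ i)) = (\<Sum>i<n. scale (w i) (d ^ i))"
  shows "\<forall>i<n. v i = w i"
proof -
  interpret vector_space scale by fact
  have "(\<Sum>i<n. scale (v i - w i) (d ^ i)) = 0"
    using assms(3) by (simp add: scale_left_diff_distrib sum_subtractf)
  then show ?thesis using prim_indep[OF vs p, of "\<lambda>i. v i - w i"] by auto
qed

lemma pcoords_prop: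
  assumes vs: "vector_space scale" and p: "primitive scale n d"
  shows "(\<forall>i\<ge>n. pcoords scale n d y i = 0) \<and> y = (\<Sum>i<n. scale (pcoords scale n d y i) (d ^ i))"
proof -
  obtain v where v: "y = (\<Sum>i<n. scale (v i) (d ^ i))" using prim_span[OF vs p] by blast
  define w where "w i = (if i < n then v i else 0)" for i
  have w: "(\<forall>i\<ge>n. w i = 0) \<and> y = (\<Sum>i<n. scale (w i) (d ^ i))"
    unfolding w_def by (simp add: v)
  have "\<exists>!ys. (\<forall>i\<ge>n. ys i = 0) \<and> y = (\<Sum>i<n. scale (ys i) (d ^ i))"
  proof (rule ex1I[of _ w])
    show "(\<forall>i\<ge>n. w i = 0) \<and> y = (\<Sum>i<n. scale (w i) (d ^ i))" by (rule w)
    fix ys assume ys: "(\<forall>i\<ge>n. ys i = 0) \<and> y = (\<Sum>i<n. scale (ys i) (d ^ i))"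
    then have "(\<Sum>i<n. scale (ys i) (d ^ i)) = (\<Sum>i<n. scale (w i) (d ^ i))" using w by metis
    then have "\<forall>i<n. ys i = w i" using prim_unique[OF vs p, of ys w] by blast
    show "ys = w"
    proof
      fix i show "ys i = w i" using ys w \<open>\<forall>i<n. ys i = w i\<close> by (cases "i < n") auto
    qed
  qed
  then show ?thesis unfolding pcoords_def by (rule theI')
qed

lemma pcoords_eq:
  assumes vs: "vector_space scale" and p: "primitive scale n d"
    and "y = (\<Sum>i<n. scale (v i) (d ^ i))" and "i < n"
  shows "pcoords scale n d y i = v i"
proof -
  have "(\<Sum>i<n. scale (pcoords scale n d y i) (d ^ i)) = (\<Sum>i<n. scale (v i) (d ^ i))"
    using pcoords_prop[OF vs p, of y] assms(3) by simp
  then show ?thesis using prim_unique[OF vs p, of "pcoords scale n d y" v] assms(4) by blast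
qed

lemma pf_sum: "finite A \<Longrightarrow> (\<And>j. j \<in> A \<Longrightarrow> f j \<in> poly_fun) \<Longrightarrow> (\<lambda>v. \<Sum>j\<in>A. f j v) \<in> poly_fun"
proof (induction A rule: finite_induct)
  case empty then show ?case using pf_const[of 0] by simp
next
  case (insert a A)
  then have "(\<lambda>v. f a v + (\<Sum>j\<in>A. f j v)) \<in> poly_fun" by (intro pf_add) auto
  then show ?case using insert by simp
qed

lemma pf_prod: "finite A \<Longrightarrow> (\<And>j. j \<in> A \<Longrightarrow> f j \<in> poly_fun) \<Longrightarrow> (\<lambda>v. \<Prod>j\<in>A. f j v) \<in> poly_fun"
proof (induction A rule: finite_induct)
  case empty then show ?case using pf_const[of 1] by simp
next
  case (insert a A)
  then have "(\<lambda>v. f a v * (\<Prod>j\<in>A. f j v)) \<in> poly_fun" by (intro pf_mult) auto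
  then show ?case using insert by simp
qed

lemma pf_compose:
  assumes "p \<in> poly_fun" and "\<And>i. g i \<in> poly_fun"
  shows "(\<lambda>v. p (\<lambda>i. g i v)) \<in> poly_fun"
  using assms(1)
proof induction
  case (pf_const a) then show ?case by (rule poly_fun.pf_const)
next
  case (pf_var i) then show ?case using assms(2) by simp
next
  case (pf_add p q) show ?case by (rule poly_fun.pf_add[OF pf_add.IH(1) pf_add.IH(2)])
next
  case (pf_mult p q) show ?case by (rule poly_fun.pf_mult[OF pf_mult.IH(1) pf_mult.IH(2)])
qed

lemma pf_line:
  fixes p :: "(nat \<Rightarrow> 'a::comm_ring_1) \<Rightarrow> 'a"
  assumes "p \<in> poly_fun"
  shows "\<exists>P. \<forall>t. p (\<lambda>i. u i + t * w i) = poly P t"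
  using assms
proof induction
  case (pf_const a) then show ?case by (intro exI[of _ "[:a:]"]) simp
next
  case (pf_var i) then show ?case by (intro exI[of _ "[:u i, w i:]"]) (simp add: algebra_simps)
next
  case (pf_add p q)
  then obtain P Q where "\<forall>t. p (\<lambda>i. u i + t * w i) = poly P t" "\<forall>t. q (\<lambda>i. u i + t * w i) = poly Q t" by blast
  then show ?case by (intro exI[of _ "P + Q"]) simp
next
  case (pf_mult p q)
  then obtain P Q where "\<forall>t. p (\<lambda>i. u i + t * w i) = poly P t" "\<forall>t. q (\<lambda>i. u i + t * w i) = poly Q t" by blast
  then show ?case by (intro exI[of _ "P * Q"]) simp
qed

lemma pf_det:
  assumes "\<And>i j. i < N \<Longrightarrow> j < N \<Longrightarrow> f i j \<in> poly_fun"
  shows "(\<lambda>v. det (mat N N (\<lambda>(i,j). f i j v))) \<in> poly_fun"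
proof -
  have "det (mat N N (\<lambda>(i,j). f i j v)) = (\<Sum> p \<in> {p. p permutes {0 ..< N}}.
     signof p * (\<Prod> i = 0 ..< N. f i (p i) v))" for v
  proof -
    have "det (mat N N (\<lambda>(i,j). f i j v)) = (\<Sum> p \<in> {p. p permutes {0 ..< N}}.
     signof p * (\<Prod> i = 0 ..< N. (mat N N (\<lambda>(i,j). f i j v)) $$ (i, p i)))"
      by (rule det_def') simp
    also have "\<dots> = (\<Sum> p \<in> {p. p permutes {0 ..< N}}. signof p * (\<Prod> i = 0 ..< N. f i (p i) v))"
    proof (rule sum.cong[OF refl])
      fix p assume "p \<in> {p. p permutes {0 ..< N}}"
      then have "p i < N" if "i < N" for i using that permutes_in_image[of p "{0..<N}" i] by auto
      then show "signof p * (\<Prod> i = 0 ..< N. (mat N N (\<lambda>(i,j). f i j v)) $$ (i, p i)) =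
          signof p * (\<Prod> i = 0 ..< N. f i (p i) v)" by (intro arg_cong2[where f="(*)"] prod.cong) auto
    qed
    finally show ?thesis .
  qed
  moreover have "(\<lambda>v. \<Sum> p \<in> {p. p permutes {0 ..< N}}. signof p * (\<Prod> i = 0 ..< N. f i (p i) v)) \<in> poly_fun"
  proof (rule pf_sum)
    show "finite {p. p permutes {0 ..< N}}" by (rule finite_permutations) simp
    fix p assume "p \<in> {p. p permutes {0 ..< N}}"
    then have pi: "p i < N" if "i < N" for i using that permutes_in_image[of p "{0..<N}" i] by auto
    show "(\<lambda>v. signof p * (\<Prod> i = 0 ..< N. f i (p i) v)) \<in> poly_fun"
      by (intro pf_mult pf_const pf_prod) (auto intro: assms pi)
  qed
  ultimately show ?thesis by simp
qed

lemma pf_adj: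
  assumes "\<And>i j. i < N \<Longrightarrow> j < N \<Longrightarrow> f i j \<in> poly_fun" and "i < N" "j < N"
  shows "(\<lambda>v. adj_mat (mat N N (\<lambda>(i,j). f i j v)) $$ (i,j)) \<in> poly_fun"
proof -
  define g where "g a b = f (if a < j then a else Suc a) (if b < i then b else Suc b)" for a b
  have "adj_mat (mat N N (\<lambda>(i,j). f i j v)) $$ (i,j) =
     (-1)^(j+i) * det (mat (N-1) (N-1) (\<lambda>(a,b). g a b v))" for v
  proof -
    have "mat_delete (mat N N (\<lambda>(i,j). f i j v)) j i = mat (N-1) (N-1) (\<lambda>(a,b). g a b v)"
    proof (rule eq_matI)
      fix a b assume ab: "a < dim_row (mat (N-1) (N-1) (\<lambda>(a,b). g a b v))"
        "b < dim_col (mat (N-1) (N-1) (\<lambda>(a,b). g a b v))"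
      then have "(if a < j then a else Suc a) < N" "(if b < i then b else Suc b) < N" by auto
      then show "mat_delete (mat N N (\<lambda>(i,j). f i j v)) j i $$ (a, b) = mat (N-1) (N-1) (\<lambda>(a,b). g a b v) $$ (a, b)"
        using ab unfolding mat_delete_def g_def by simp
    qed auto
    then show ?thesis unfolding adj_mat_def cofactor_def using assms(2,3) by simp
  qed
  moreover have "(\<lambda>v. (-1)^(j+i) * det (mat (N-1) (N-1) (\<lambda>(a,b). g a b v))) \<in> poly_fun"
    by (intro pf_mult pf_const pf_det) (auto simp: g_def intro!: assms(1))
  ultimately show ?thesis by simp
qed

locale SE =
  fixes scale :: "'a::field_char_0 \<Rightarrow> 'b::comm_ring_1 \<Rightarrow> 'b" and n :: nat and c :: 'b
  assumes alg: "k_algebra scale" and prim: "primitive scale n c"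
begin

lemma vs: "vector_space scale" using alg unfolding k_algebra_def by simp
lemma smult: "scale a (x * y) = scale a x * y" using alg unfolding k_algebra_def by simp

sublocale vector_space scale by (rule vs)

lemma smult2: "scale a (x * y) = x * scale a y"
  by (metis smult mult.commute)

definition emb :: "'a \<Rightarrow> 'b" where "emb a = scale a 1"

lemma scale_emb: "scale a x = emb a * x"
  unfolding emb_def by (metis smult mult_1)

lemma emb_add[simp]: "emb (a + b) = emb a + emb b" unfolding emb_def by (simp add: scale_left_distrib)
lemma emb_mult[simp]: "emb (a * b) = emb a * emb b" unfolding emb_def by (metis scale_scale scale_emb emb_def)
lemma emb_0[simp]: "emb 0 = 0" unfolding emb_def by simp
lemma emb_1[simp]: "emb 1 = 1" unfolding emb_def by simp
lemma emb_minus[simp]: "emb (- a) = - emb a" unfolding emb_def by (simp add: scale_minus_left)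
lemma emb_diff[simp]: "emb (a - b) = emb a - emb b" unfolding emb_def by (simp add: scale_left_diff_distrib)
lemma emb_sum: "emb (\<Sum>i\<in>A. f i) = (\<Sum>i\<in>A. emb (f i))" unfolding emb_def by (simp add: scale_sum_left)
lemma emb_pow: "emb (a ^ k) = emb a ^ k" by (induction k) simp_all

lemma emb_inj: "emb a = emb b \<Longrightarrow> a = b"
proof -
  assume "emb a = emb b"
  then have "scale (a - b) 1 = 0" unfolding emb_def by (simp add: scale_left_diff_distrib)
  then show "a = b" by simp
qed

lemma n_pos: "n > 0" by (rule prim_n_pos[OF vs prim])

definition crd :: "'b \<Rightarrow> nat \<Rightarrow> 'a" where "crd y = pcoords scale n c y"
definition elt :: "(nat \<Rightarrow> 'a) \<Rightarrow> 'b" where "elt v = (\<Sum>i<n. scale (v i) (c ^ i))"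

lemma crd_high: "n \<le> i \<Longrightarrow> crd y i = 0"
  unfolding crd_def using pcoords_prop[OF vs prim, of y] by blast

lemma elt_crd: "elt (crd y) = y"
  unfolding crd_def elt_def using pcoords_prop[OF vs prim, of y] by metis

lemma crd_elt: "i < n \<Longrightarrow> crd (elt v) i = v i"
  unfolding crd_def elt_def by (rule pcoords_eq[OF vs prim]) simp_all

lemma elt_cong: "(\<And>i. i < n \<Longrightarrow> v i = w i) \<Longrightarrow> elt v = elt w"
  unfolding elt_def by (rule sum.cong) auto

lemma crd_eqI: "(\<And>i. i < n \<Longrightarrow> crd y i = crd z i) \<Longrightarrow> y = z"
  by (metis elt_crd elt_cong)

lemma crd_add: "crd (y + z) i = crd y i + crd z i"
proof (cases "i < n")
  case True
  have "y + z = elt (\<lambda>i. crd y i + crd z i)"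
    unfolding elt_def by (subst (1 2) elt_crd[symmetric]) (simp add: elt_def scale_left_distrib sum.distrib)
  then show ?thesis using True crd_elt by simp
qed (simp add: crd_high)

lemma crd_scale: "crd (scale a y) i = a * crd y i"
proof (cases "i < n")
  case True
  have "scale a y = elt (\<lambda>i. a * crd y i)"
    unfolding elt_def by (subst (1) elt_crd[symmetric]) (simp add: elt_def scale_sum_right)
  then show ?thesis using True crd_elt by simp
qed (simp add: crd_high)

lemma crd_zero: "crd 0 i = 0"
  using crd_scale[of 0 0 i] by simp

lemma crd_minus: "crd (- y) i = - crd y i"
  using crd_scale[of "-1" y i] by (simp add: scale_minus_left)

lemma crd_diff: "crd (y - z) i = crd y i - crd z i"
  using crd_add[of y "- z" i] crd_minus[of z i] by simp

lemma crd_sum: "crd (\<Sum>j\<in>A. f j) i = (\<Sum>j\<in>A. crd (f j) i)"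
  by (induction A rule: infinite_finite_induct) (simp_all add: crd_zero crd_add)

lemma crd_emb: "crd (emb a * y) i = a * crd y i"
  using crd_scale scale_emb by metis

lemma crd_cpow: "j < n \<Longrightarrow> crd (c ^ j) i = (if i = j then 1 else 0)"
proof -
  assume j: "j < n"
  have "(\<Sum>i<n. scale (if i = j then 1 else 0) (c ^ i)) = (\<Sum>i<n. if i = j then c ^ i else 0)"
    by (rule sum.cong) auto
  then have "c ^ j = elt (\<lambda>i. if i = j then 1 else 0)"
    unfolding elt_def using j by simp
  then show ?thesis using crd_high[of i] crd_elt by (cases "i < n") (auto simp: j)
qed

lemma expand: "y = (\<Sum>i<n. scale (crd y i) (c ^ i))"
  using elt_crd[of y] unfolding elt_def by simp

lemma crd_mult: "crd (y * z) k = (\<Sum>i<n. \<Sum>j<n. crd y i * crd z j * crd (c ^ (i + j)) k)"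
proof -
  have "y * z = (\<Sum>i<n. scale (crd y i) (c ^ i)) * (\<Sum>j<n. scale (crd z j) (c ^ j))"
    using expand[of y] expand[of z] by metis
  also have "\<dots> = (\<Sum>i<n. \<Sum>j<n. scale (crd y i) (c ^ i) * scale (crd z j) (c ^ j))"
    by (rule sum_product)
  also have "\<dots> = (\<Sum>i<n. \<Sum>j<n. scale (crd y i * crd z j) (c ^ (i + j)))"
    by (intro sum.cong refl) (simp add: scale_emb power_add algebra_simps)
  finally show ?thesis by (simp add: crd_sum crd_scale algebra_simps)
qed

end

lemma adj_entry1:
  assumes A: "A \<in> carrier_mat N N" and kl: "k < N" "l < N"
  shows "(\<Sum>j<N. A $$ (k,j) * adj_mat A $$ (j,l)) = (if k = l then det A else 0)"
proof -
  have "(A * adj_mat A) $$ (k,l) = (det A \<cdot>\<^sub>m 1\<^sub>m N) $$ (k,l)" using adj_mat(2)[OF A] by simp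
  moreover have "(A * adj_mat A) $$ (k,l) = (\<Sum>j<N. A $$ (k,j) * adj_mat A $$ (j,l))"
    using A kl adj_mat(1)[OF A] by (simp add: scalar_prod_def lessThan_atLeast0)
  moreover have "(det A \<cdot>\<^sub>m 1\<^sub>m N) $$ (k,l) = (if k = l then det A else 0)" using kl by simp
  ultimately show ?thesis by simp
qed

lemma adj_entry2:
  assumes A: "A \<in> carrier_mat N N" and kl: "k < N" "l < N"
  shows "(\<Sum>j<N. adj_mat A $$ (k,j) * A $$ (j,l)) = (if k = l then det A else 0)"
proof -
  have "(adj_mat A * A) $$ (k,l) = (det A \<cdot>\<^sub>m 1\<^sub>m N) $$ (k,l)" using adj_mat(3)[OF A] by simp
  moreover have "(adj_mat A * A) $$ (k,l) = (\<Sum>j<N. adj_mat A $$ (k,j) * A $$ (j,l))"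
    using A kl adj_mat(1)[OF A] by (simp add: scalar_prod_def lessThan_atLeast0)
  moreover have "(det A \<cdot>\<^sub>m 1\<^sub>m N) $$ (k,l) = (if k = l then det A else 0)" using kl by simp
  ultimately show ?thesis by simp
qed

context SE
begin

definition Mf :: "(nat \<Rightarrow> 'b) \<Rightarrow> 'a mat" where
  "Mf g = mat n n (\<lambda>(k,j). crd (g j) k)"

lemma Mf_carrier: "Mf g \<in> carrier_mat n n" unfolding Mf_def by simp
lemma Mf_index: "k < n \<Longrightarrow> j < n \<Longrightarrow> Mf g $$ (k,j) = crd (g j) k" unfolding Mf_def by simp

definition Cr :: "(nat \<Rightarrow> 'b) \<Rightarrow> 'b \<Rightarrow> nat \<Rightarrow> 'a" where
  "Cr g y j = (\<Sum>l<n. adj_mat (Mf g) $$ (j,l) * crd y l)"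

lemma Cr_add: "Cr g (y + z) j = Cr g y j + Cr g z j"
  unfolding Cr_def by (simp add: crd_add algebra_simps sum.distrib)

lemma Cr_scale: "Cr g (scale a y) j = a * Cr g y j"
  unfolding Cr_def by (simp add: crd_scale algebra_simps sum_distrib_left)

lemma Cr_sum: "Cr g (\<Sum>i\<in>A. f i) j = (\<Sum>i\<in>A. Cr g (f i) j)"
  unfolding Cr_def by (simp add: crd_sum sum_distrib_left sum_distrib_right mult.commute[of _ "crd _ _"] sum.swap[of _ A])

lemma cramer:
  "(\<Sum>j<n. scale (Cr g y j) (g j)) = scale (det (Mf g)) y"
proof (rule crd_eqI)
  fix k assume k: "k < n"
  have "crd (\<Sum>j<n. scale (Cr g y j) (g j)) k = (\<Sum>j<n. Cr g y j * crd (g j) k)"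
    by (simp add: crd_sum crd_scale)
  also have "\<dots> = (\<Sum>j<n. \<Sum>l<n. Mf g $$ (k,j) * adj_mat (Mf g) $$ (j,l) * crd y l)"
    unfolding Cr_def by (intro sum.cong refl) (simp add: Mf_index k sum_distrib_left sum_distrib_right algebra_simps)
  also have "\<dots> = (\<Sum>l<n. (\<Sum>j<n. Mf g $$ (k,j) * adj_mat (Mf g) $$ (j,l)) * crd y l)"
    by (subst sum.swap) (simp add: sum_distrib_right)
  also have "\<dots> = (\<Sum>l<n. (if k = l then det (Mf g) else 0) * crd y l)"
    by (intro sum.cong refl) (simp add: adj_entry1[OF Mf_carrier k])
  also have "\<dots> = (\<Sum>l<n. if k = l then det (Mf g) * crd y l else 0)" by (intro sum.cong refl) simp
  also have "\<dots> = det (Mf g) * crd y k" using k by simp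
  also have "\<dots> = crd (scale (det (Mf g)) y) k" by (simp add: crd_scale)
  finally show "crd (\<Sum>j<n. scale (Cr g y j) (g j)) k = crd (scale (det (Mf g)) y) k" .
qed

lemma cramer_indep:
  assumes "(\<Sum>l<n. scale (w l) (g l)) = 0" and "det (Mf g) \<noteq> 0" and i: "i < n"
  shows "w i = 0"
proof -
  have z: "(\<Sum>l<n. Mf g $$ (j,l) * w l) = 0" if "j < n" for j
  proof -
    have "(\<Sum>l<n. Mf g $$ (j,l) * w l) = crd (\<Sum>l<n. scale (w l) (g l)) j"
      by (simp add: crd_sum crd_scale Mf_index that mult.commute)
    then show ?thesis using assms(1) crd_zero by simp
  qed
  have "(\<Sum>j<n. adj_mat (Mf g) $$ (i,j) * (\<Sum>l<n. Mf g $$ (j,l) * w l)) = 0"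
    using z by simp
  moreover have "(\<Sum>j<n. adj_mat (Mf g) $$ (i,j) * (\<Sum>l<n. Mf g $$ (j,l) * w l))
      = (\<Sum>l<n. (\<Sum>j<n. adj_mat (Mf g) $$ (i,j) * Mf g $$ (j,l)) * w l)"
    by (simp add: sum_distrib_left sum_distrib_right algebra_simps) (subst sum.swap, simp)
  moreover have "\<dots> = (\<Sum>l<n. (if i = l then det (Mf g) else 0) * w l)"
    by (intro sum.cong refl) (simp add: adj_entry2[OF Mf_carrier i])
  moreover have "\<dots> = (\<Sum>l<n. if i = l then det (Mf g) * w l else 0)" by (intro sum.cong refl) simp
  moreover have "\<dots> = det (Mf g) * w i" using i by simp
  ultimately show ?thesis using assms(2) by simp
qed

end

lemma units_mult: "a \<in> units \<Longrightarrow> b \<in> units \<Longrightarrow> (a * b :: 'b::comm_ring_1) \<in> units"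
  unfolding units_def by auto

lemma units_pow: "a \<in> units \<Longrightarrow> (a ^ k :: 'b::comm_ring_1) \<in> units"
  by (induction k) (simp_all add: units_mult[unfolded units_def] units_def)

lemma uinv: assumes "b \<in> units" shows "b * uinv (b::'b::comm_ring_1) = 1"
proof -
  obtain y where y: "1 = b * y" using assms unfolding units_def by (auto elim: dvdE)
  have "b * (THE y. b * y = 1) = 1"
  proof (rule theI)
    show "b * y = 1" using y by simp
    fix z assume "b * z = 1"
    then have "z = z * (b * y)" using y by simp
    also have "\<dots> = y" using \<open>b * z = 1\<close> by (metis mult.assoc mult.commute mult_1)
    finally show "z = y" .
  qed
  then show ?thesis unfolding uinv_def .
qed

context SE
begin

lemma c_unit: "c \<in> units" using prim unfolding primitive_def by simp

lemma prim_det: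
  assumes p: "primitive scale n d"
  shows "det (Mf (\<lambda>j. d ^ j)) \<noteq> 0"
proof
  assume "det (Mf (\<lambda>j. d ^ j)) = 0"
  then obtain v where v: "v \<in> carrier_vec n" "v \<noteq> 0\<^sub>v n" "Mf (\<lambda>j. d ^ j) *\<^sub>v v = 0\<^sub>v n"
    using det_0_iff_vec_prod_zero_field[OF Mf_carrier] by blast
  have "(\<Sum>l<n. scale (v $ l) (d ^ l)) = 0"
  proof (rule crd_eqI)
    fix k assume k: "k < n"
    have "crd (\<Sum>l<n. scale (v $ l) (d ^ l)) k = (Mf (\<lambda>j. d ^ j) *\<^sub>v v) $ k"
      using k v(1) Mf_carrier[of "\<lambda>j. d ^ j"]
      by (simp add: crd_sum crd_scale scalar_prod_def lessThan_atLeast0 Mf_index mult.commute)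
    then show "crd (\<Sum>l<n. scale (v $ l) (d ^ l)) k = crd 0 k" using v(3) k by (simp add: crd_zero)
  qed
  then have "\<forall>l<n. v $ l = 0" using prim_indep[OF vs p] by blast
  then have "v = 0\<^sub>v n" using v(1) by (intro eq_vecI) auto
  with v(2) show False by simp
qed

lemma det_prim:
  assumes u: "d \<in> units" and dt: "det (Mf (\<lambda>j. d ^ j)) \<noteq> 0"
  shows "primitive scale n d"
proof -
  let ?S = "(\<lambda>i. d ^ i) ` {..<n}"
  have ind: "w l = 0" if "(\<Sum>l<n. scale (w l) (d ^ l)) = 0" "l < n" for w l
    using cramer_indep[OF that(1) dt that(2)] .
  have inj: "inj_on (\<lambda>i. d ^ i) {..<n}"
  proof (rule inj_onI)
    fix i j assume ij: "i \<in> {..<n}" "j \<in> {..<n}" "d ^ i = d ^ j"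
    show "i = j"
    proof (rule ccontr)
      assume "i \<noteq> j"
      let ?w = "\<lambda>l. (if l = i then 1 else 0) - (if l = j then 1 else (0::'a))"
      have "(\<Sum>l<n. scale (?w l) (d ^ l)) = (\<Sum>l<n. (if l = i then d ^ l else 0) - (if l = j then d ^ l else 0))"
        by (intro sum.cong refl) (simp add: scale_left_diff_distrib)
      also have "\<dots> = 0" using ij by (simp add: sum_subtractf)
      finally have wz: "(\<Sum>l<n. scale (?w l) (d ^ l)) = 0" .
      have "?w i = 0" by (rule ind[OF wz]) (use ij in auto)
      with \<open>i \<noteq> j\<close> show False by simp
    qed
  qed
  have nd: "\<not> dependent ?S"
  proof
    assume "dependent ?S"
    then obtain u where u: "\<exists>v\<in>?S. u v \<noteq> 0" "(\<Sum>v\<in>?S. scale (u v) v) = 0"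
      using dependent_finite[of ?S] by auto
    have "(\<Sum>l<n. scale (u (d ^ l)) (d ^ l)) = 0"
      using u(2) by (subst (asm) sum.reindex[OF inj]) simp
    then have "\<forall>l<n. u (d ^ l) = 0" using ind[of "\<lambda>l. u (d ^ l)"] by blast
    with u(1) show False by auto
  qed
  have sp: "span ?S = UNIV"
  proof -
    have "y \<in> span ?S" for y
    proof -
      have "y = scale (1 / det (Mf (\<lambda>j. d ^ j))) (scale (det (Mf (\<lambda>j. d ^ j))) y)" using dt by simp
      also have "\<dots> = (\<Sum>j<n. scale (Cr (\<lambda>j. d ^ j) y j / det (Mf (\<lambda>j. d ^ j))) (d ^ j))"
        unfolding cramer[symmetric] by (simp add: scale_sum_right divide_inverse mult.commute)
      also have "\<dots> \<in> span ?S" by (intro span_sum span_scale span_base) auto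
      finally show ?thesis .
    qed
    then show ?thesis by auto
  qed
  show ?thesis unfolding primitive_def using u inj nd sp by simp
qed

lemma pcoords_Cr:
  assumes dt: "det (Mf (\<lambda>j. d ^ j)) \<noteq> 0" and u: "d \<in> units" and j: "j < n"
  shows "pcoords scale n d y j = Cr (\<lambda>j. d ^ j) y j / det (Mf (\<lambda>j. d ^ j))"
proof (rule pcoords_eq[OF vs det_prim[OF u dt] _ j])
  have "y = scale (1 / det (Mf (\<lambda>j. d ^ j))) (scale (det (Mf (\<lambda>j. d ^ j))) y)" using dt by simp
  also have "\<dots> = (\<Sum>j<n. scale (Cr (\<lambda>j. d ^ j) y j / det (Mf (\<lambda>j. d ^ j))) (d ^ j))"
    unfolding cramer[symmetric] by (simp add: scale_sum_right divide_inverse mult.commute)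
  finally show "y = (\<Sum>j<n. scale (Cr (\<lambda>j. d ^ j) y j / det (Mf (\<lambda>j. d ^ j))) (d ^ j))" .
qed

definition iota :: "'b \<Rightarrow> 'b" where
  "iota b = (\<Sum>j<n. scale (Cr (\<lambda>j. b * c ^ j) 1 j) (c ^ j))"

definition Nm :: "'b \<Rightarrow> 'a" where "Nm b = det (Mf (\<lambda>j. b * c ^ j))"

lemma b_iota: "b * iota b = emb (Nm b)"
proof -
  have "b * iota b = (\<Sum>j<n. scale (Cr (\<lambda>j. b * c ^ j) 1 j) (b * c ^ j))"
    unfolding iota_def by (simp add: sum_distrib_left smult2)
  also have "\<dots> = emb (Nm b)" unfolding cramer Nm_def emb_def ..
  finally show ?thesis .
qed

lemma unit_Nm:
  assumes b: "b \<in> units" shows "Nm b \<noteq> 0"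
proof
  assume "Nm b = 0"
  then obtain v where v: "v \<in> carrier_vec n" "v \<noteq> 0\<^sub>v n" "Mf (\<lambda>j. b * c ^ j) *\<^sub>v v = 0\<^sub>v n"
    using det_0_iff_vec_prod_zero_field[OF Mf_carrier] unfolding Nm_def by blast
  have "(\<Sum>l<n. scale (v $ l) (b * c ^ l)) = 0"
  proof (rule crd_eqI)
    fix k assume k: "k < n"
    have "crd (\<Sum>l<n. scale (v $ l) (b * c ^ l)) k = (Mf (\<lambda>j. b * c ^ j) *\<^sub>v v) $ k"
      using k v(1) Mf_carrier[of "\<lambda>j. b * c ^ j"]
      by (simp add: crd_sum crd_scale scalar_prod_def lessThan_atLeast0 Mf_index mult.commute)
    then show "crd (\<Sum>l<n. scale (v $ l) (b * c ^ l)) k = crd 0 k" using v(3) k by (simp add: crd_zero)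
  qed
  then have "b * elt (\<lambda>l. v $ l) = 0" unfolding elt_def by (simp add: sum_distrib_left smult2)
  then have "uinv b * (b * elt (\<lambda>l. v $ l)) = 0" by simp
  moreover have "uinv b * (b * elt (\<lambda>l. v $ l)) = (b * uinv b) * elt (\<lambda>l. v $ l)"
    by (simp only: mult.assoc[symmetric] mult.commute[of b "uinv b"])
  ultimately have "elt (\<lambda>l. v $ l) = 0" using uinv[OF b] by simp
  then have "\<forall>l<n. v $ l = 0" using crd_elt crd_zero by metis
  then have "v = 0\<^sub>v n" using v(1) by (intro eq_vecI) auto
  with v(2) show False by simp
qed

lemma Nm_unit: assumes "Nm b \<noteq> 0" shows "b \<in> units"
proof -
  have "b * (emb (1 / Nm b) * iota b) = emb (1 / Nm b) * (b * iota b)" by (rule mult.left_commute)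
  also have "\<dots> = emb (1 / Nm b) * emb (Nm b)" by (simp only: b_iota)
  also have "\<dots> = 1" using assms by (simp flip: emb_mult)
  finally have e: "b * (emb (1 / Nm b) * iota b) = 1" .
  have "b dvd 1" by (rule dvdI[of 1 b "emb (1 / Nm b) * iota b"]) (use e in simp)
  then show ?thesis unfolding units_def by simp
qed

lemma iota_uinv: assumes b: "b \<in> units" shows "iota b = emb (Nm b) * uinv b"
proof -
  have "iota b = iota b * (b * uinv b)" by (simp only: uinv[OF b] mult_1_right)
  also have "\<dots> = (b * iota b) * uinv b" by (simp only: mult.assoc[symmetric] mult.commute[of "iota b" b])
  also have "\<dots> = emb (Nm b) * uinv b" by (simp only: b_iota)
  finally show ?thesis .
qed

definition Dd :: "'b \<Rightarrow> 'a" where "Dd b = det (Mf (\<lambda>j. (c * b ^ 2) ^ j))"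
definition Gy :: "'b \<Rightarrow> 'b \<Rightarrow> 'a" where "Gy b y = Cr (\<lambda>j. (c * b ^ 2) ^ j) (y * iota b) (n - 1)"

lemma V_iff: assumes b: "b \<in> units" shows "primitive scale n (c * b ^ 2) \<longleftrightarrow> Dd b \<noteq> 0"
proof
  assume "primitive scale n (c * b ^ 2)"
  then show "Dd b \<noteq> 0" unfolding Dd_def by (rule prim_det)
next
  assume "Dd b \<noteq> 0"
  then show "primitive scale n (c * b ^ 2)" unfolding Dd_def
    by (rule det_prim[OF units_mult[OF c_unit units_pow[OF b]]])
qed

lemma top_formula:
  assumes b: "b \<in> units" and D: "Dd b \<noteq> 0"
  shows "top_coeff scale n (y * uinv b) (c * b ^ 2) = Gy b y / (Nm b * Dd b)"
proof -
  have N: "Nm b \<noteq> 0" using unit_Nm[OF b] .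
  have yy: "y * uinv b = scale (1 / Nm b) (y * iota b)"
  proof -
    have a: "scale (1 / Nm b) (y * iota b) = emb (1 / Nm b) * (y * (emb (Nm b) * uinv b))"
      by (simp only: iota_uinv[OF b] scale_emb)
    have b2: "emb (1 / Nm b) * (y * (emb (Nm b) * uinv b)) = (emb (1 / Nm b) * emb (Nm b)) * (y * uinv b)"
      by (metis mult.assoc mult.left_commute)
    have c: "emb (1 / Nm b) * emb (Nm b) = 1" using N emb_mult[of "1 / Nm b" "Nm b", symmetric] by simp
    show ?thesis using a b2 c by simp
  qed
  have "top_coeff scale n (y * uinv b) (c * b ^ 2) = Cr (\<lambda>j. (c * b ^ 2) ^ j) (y * uinv b) (n - 1) / Dd b"
    unfolding top_coeff_def Dd_def
  proof (rule pcoords_Cr)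
    show "det (Mf (\<lambda>j. (c * b\<^sup>2) ^ j)) \<noteq> 0" using D unfolding Dd_def .
    show "c * b\<^sup>2 \<in> units" by (rule units_mult[OF c_unit units_pow[OF b]])
    show "n - 1 < n" using n_pos by simp
  qed
  also have "\<dots> = Gy b y / (Nm b * Dd b)" unfolding yy Cr_scale Gy_def by simp
  finally show ?thesis .
qed

end

lemma pf_qform:
  assumes "\<And>i. i < m \<Longrightarrow> g i \<in> poly_fun"
  shows "(\<lambda>v. qform Q m (\<lambda>i. g i v)) \<in> poly_fun"
  unfolding qform_def
  by (intro pf_sum pf_mult pf_const) (auto intro: assms)

lemma qform_div: "qform Q m (\<lambda>i. w i / (a::'a::field)) = qform Q m w / a ^ 2"
  unfolding qform_def by (simp add: sum_divide_distrib power2_eq_square algebra_simps)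

context SE
begin

definition pfe :: "((nat \<Rightarrow> 'a) \<Rightarrow> 'b) \<Rightarrow> bool" where
  "pfe F \<longleftrightarrow> (\<forall>k. (\<lambda>v. crd (F v) k) \<in> poly_fun)"

lemma pfe_const: "pfe (\<lambda>v. a)" unfolding pfe_def by (simp add: pf_const)

lemma pfe_elt: "pfe (\<lambda>v. elt v)"
  unfolding pfe_def
proof
  fix k show "(\<lambda>v. crd (elt v) k) \<in> poly_fun"
  proof (cases "k < n")
    case True then show ?thesis by (simp add: crd_elt pf_var)
  next
    case False then show ?thesis by (simp add: crd_high pf_const)
  qed
qed

lemma pfe_add: "pfe F \<Longrightarrow> pfe G \<Longrightarrow> pfe (\<lambda>v. F v + G v)"
  unfolding pfe_def by (simp add: crd_add pf_add)

lemma pfe_mult: "pfe F \<Longrightarrow> pfe G \<Longrightarrow> pfe (\<lambda>v. F v * G v)"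
  unfolding pfe_def crd_mult by (auto intro!: pf_sum pf_mult pf_const)

lemma pfe_pow: "pfe F \<Longrightarrow> pfe (\<lambda>v. F v ^ k)"
  by (induction k) (simp_all add: pfe_const pfe_mult)

lemma pfe_scale: "f \<in> poly_fun \<Longrightarrow> pfe F \<Longrightarrow> pfe (\<lambda>v. scale (f v) (F v))"
  unfolding pfe_def by (simp add: crd_scale pf_mult)

lemma pfe_sum: "finite A \<Longrightarrow> (\<And>j. j \<in> A \<Longrightarrow> pfe (F j)) \<Longrightarrow> pfe (\<lambda>v. \<Sum>j\<in>A. F j v)"
  unfolding pfe_def crd_sum by (auto intro!: pf_sum)

lemma pf_detMf:
  assumes "\<And>j. j < n \<Longrightarrow> pfe (\<lambda>v. g v j)"
  shows "(\<lambda>v. det (Mf (g v))) \<in> poly_fun"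
  unfolding Mf_def
  by (rule pf_det[where f="\<lambda>k j v. crd (g v j) k", simplified]) (use assms in \<open>auto simp: pfe_def\<close>)

lemma pf_Cr:
  assumes "\<And>j. j < n \<Longrightarrow> pfe (\<lambda>v. g v j)" and "pfe Y" and j: "j < n"
  shows "(\<lambda>v. Cr (g v) (Y v) j) \<in> poly_fun"
  unfolding Cr_def Mf_def
proof (intro pf_sum pf_mult)
  fix l assume l: "l \<in> {..<n}"
  show "(\<lambda>v. adj_mat (mat n n (\<lambda>(k, j). crd (g v j) k)) $$ (j, l)) \<in> poly_fun"
    by (rule pf_adj[where f="\<lambda>k j v. crd (g v j) k", simplified]) (use assms l in \<open>auto simp: pfe_def\<close>)
  show "(\<lambda>v. crd (Y v) l) \<in> poly_fun" using assms(2) unfolding pfe_def by simp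
qed simp

lemma pfe_iota: "pfe (\<lambda>v. iota (elt v))"
  unfolding iota_def
  by (intro pfe_sum pfe_scale pf_Cr pfe_mult pfe_elt pfe_const) auto

lemma pf_Nm: "(\<lambda>v. Nm (elt v)) \<in> poly_fun"
  unfolding Nm_def by (intro pf_detMf pfe_mult pfe_elt pfe_const)

lemma pf_Dd: "(\<lambda>v. Dd (elt v)) \<in> poly_fun"
  unfolding Dd_def by (intro pf_detMf pfe_mult pfe_pow pfe_elt pfe_const)

lemma pf_Gy: "(\<lambda>v. Gy (elt v) y) \<in> poly_fun"
  unfolding Gy_def
  by (intro pf_Cr pfe_mult pfe_pow pfe_elt pfe_const pfe_iota) (use n_pos in auto)

end

context SE
begin

lemma openness:
  "open_in_units scale n c {b \<in> {b \<in> units. primitive scale n (c * b ^ 2)}.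
      qform Q m (\<lambda>i. top_coeff scale n (x i * uinv b) (c * b ^ 2)) \<noteq> 0}"
proof -
  define P where "P = (\<lambda>v. Dd (elt v) * qform Q m (\<lambda>i. Gy (elt v) (x i)))"
  have P: "P \<in> poly_fun" unfolding P_def
    by (intro pf_mult pf_Dd pf_qform pf_Gy)
  define W where "W = {y. \<exists>p\<in>{P}. p (pcoords scale n c y) \<noteq> 0}"
  have zo: "zariski_open scale n c W" unfolding zariski_open_def W_def using P by blast
  have "{b \<in> {b \<in> units. primitive scale n (c * b ^ 2)}.
      qform Q m (\<lambda>i. top_coeff scale n (x i * uinv b) (c * b ^ 2)) \<noteq> 0} = W \<inter> units"
  proof (rule Set.set_eqI, rule iffI)
    fix b assume "b \<in> {b \<in> {b \<in> units. primitive scale n (c * b ^ 2)}.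
      qform Q m (\<lambda>i. top_coeff scale n (x i * uinv b) (c * b ^ 2)) \<noteq> 0}"
    then have b: "b \<in> units" and pr: "primitive scale n (c * b ^ 2)"
      and q: "qform Q m (\<lambda>i. top_coeff scale n (x i * uinv b) (c * b ^ 2)) \<noteq> 0" by auto
    have D: "Dd b \<noteq> 0" using V_iff[OF b] pr by simp
    have "qform Q m (\<lambda>i. Gy b (x i) / (Nm b * Dd b)) \<noteq> 0"
      using q top_formula[OF b D] by simp
    then have "qform Q m (\<lambda>i. Gy b (x i)) \<noteq> 0" unfolding qform_div by auto
    then have "P (crd b) \<noteq> 0" unfolding P_def elt_crd using D by simp
    then show "b \<in> W \<inter> units" unfolding W_def crd_def using b by simp
  next
    fix b assume "b \<in> W \<inter> units"
    then have b: "b \<in> units" and "P (crd b) \<noteq> 0" unfolding W_def crd_def by auto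
    then have D: "Dd b \<noteq> 0" and q: "qform Q m (\<lambda>i. Gy b (x i)) \<noteq> 0" unfolding P_def elt_crd by auto
    have N: "Nm b \<noteq> 0" by (rule unit_Nm[OF b])
    have "qform Q m (\<lambda>i. Gy b (x i) / (Nm b * Dd b)) \<noteq> 0" unfolding qform_div using q N D by simp
    then have "qform Q m (\<lambda>i. top_coeff scale n (x i * uinv b) (c * b ^ 2)) \<noteq> 0"
      using top_formula[OF b D] by simp
    then show "b \<in> {b \<in> {b \<in> units. primitive scale n (c * b ^ 2)}.
      qform Q m (\<lambda>i. top_coeff scale n (x i * uinv b) (c * b ^ 2)) \<noteq> 0}"
      using b D V_iff[OF b] by simp
  qed
  then show ?thesis unfolding open_in_units_def using zo by blast
qed

end

lemma coeff_mult_1: "coeff (p * q) 1 = coeff p 0 * coeff q 1 + coeff p 1 * coeff q 0"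
  by (simp add: coeff_mult atMost_Suc numeral_2_eq_2 ac_simps)

lemma coeff_mult_2: "coeff (p * q) 2 = coeff p 0 * coeff q 2 + coeff p 1 * coeff q 1 + coeff p 2 * coeff q 0"
  by (simp add: coeff_mult atMost_Suc numeral_2_eq_2 ac_simps)

lemma poly_zero_cofinite:
  fixes p :: "'a::field_char_0 poly"
  assumes "finite Z" and "\<And>t. t \<notin> Z \<Longrightarrow> poly p t = 0"
  shows "p = 0"
proof (rule ccontr)
  assume "p \<noteq> 0"
  then have "finite {t. poly p t = 0}" by (rule poly_roots_finite)
  then have "finite (Z \<union> {t. poly p t = 0})" using assms(1) by simp
  moreover have "Z \<union> {t. poly p t = 0} = UNIV" using assms(2) by auto
  moreover have "infinite (UNIV :: 'a set)" by (rule infinite_UNIV_char_0)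
  ultimately show False by simp
qed

context SE
begin

lemma poly_emb: "poly (map_poly emb P) (emb t) = emb (poly P t)"
  by (induction P) (simp_all add: map_poly_pCons)

lemma crd_poly: "crd (poly P (emb t)) k = poly (map_poly (\<lambda>s. crd s k) P) t"
proof (induction P)
  case 0 then show ?case by (simp add: crd_zero)
next
  case (pCons a P)
  have "map_poly (\<lambda>s. crd s k) (pCons a P) = pCons (crd a k) (map_poly (\<lambda>s. crd s k) P)"
    by (rule map_poly_pCons) (simp add: crd_zero)
  then show ?case using pCons(2) by (simp add: crd_add crd_emb)
qed

lemma poly_emb_zero:
  assumes "\<And>t. poly P (emb t) = 0"
  shows "P = 0"
proof (rule poly_eqI)
  fix i
  have "crd (coeff P i) k = 0" for k
  proof -
    have "poly (map_poly (\<lambda>s. crd s k) P) t = 0" for t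
      using crd_poly[of P t k] assms[of t] by (simp add: crd_zero)
    then have "map_poly (\<lambda>s. crd s k) P = 0" using poly_all_0_iff_0 by blast
    then have "coeff (map_poly (\<lambda>s. crd s k) P) i = 0" by simp
    then show ?thesis by (subst (asm) coeff_map_poly) (simp_all add: crd_zero)
  qed
  then have "coeff P i = 0" using crd_eqI[of "coeff P i" 0] crd_zero by simp
  then show "coeff P i = coeff 0 i" by simp
qed

lemma poly_emb_eq:
  assumes "\<And>t. poly P (emb t) = poly R (emb t)"
  shows "P = R"
  using poly_emb_zero[of "P - R"] assms by simp

lemma pfe_line:
  assumes "pfe F"
  shows "\<exists>SP. \<forall>t. F (\<lambda>i. u i + t * w i) = poly SP (emb t)"
proof -
  have "\<forall>k. \<exists>P. \<forall>t. crd (F (\<lambda>i. u i + t * w i)) k = poly P t"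
    using assms pf_line unfolding pfe_def by blast
  then obtain P where P: "\<And>k t. crd (F (\<lambda>i. u i + t * w i)) k = poly (P k) t" by metis
  define SP where "SP = (\<Sum>k<n. map_poly emb (P k) * [:c ^ k:])"
  have "F (\<lambda>i. u i + t * w i) = poly SP (emb t)" for t
  proof -
    have "F (\<lambda>i. u i + t * w i) = (\<Sum>k<n. scale (crd (F (\<lambda>i. u i + t * w i)) k) (c ^ k))"
      by (rule expand)
    also have "\<dots> = (\<Sum>k<n. emb (poly (P k) t) * c ^ k)" by (simp add: P scale_emb)
    also have "\<dots> = (\<Sum>k<n. poly (map_poly emb (P k) * [:c ^ k:]) (emb t))"
      by (intro sum.cong refl) (simp add: poly_emb)
    also have "\<dots> = poly SP (emb t)" unfolding SP_def by (simp add: poly_sum)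
    finally show ?thesis .
  qed
  then show ?thesis by blast
qed

definition hh :: "nat \<Rightarrow> 'a" where "hh s = crd (c ^ s) (n - 1)"

lemma hh_low: "s < n - 1 \<Longrightarrow> hh s = 0"
  unfolding hh_def using crd_cpow[of s "n - 1"] by simp

lemma hh_top: "hh (n - 1) = 1"
  unfolding hh_def using crd_cpow[of "n - 1" "n - 1"] n_pos by simp

lemma tri:
  assumes "\<And>r. r < n \<Longrightarrow> (\<Sum>s<n. scale (hh (r + s)) (W s)) = 0"
  shows "\<And>s. s < n \<Longrightarrow> W s = 0"
proof -
  have "\<forall>k'. k' < k \<longrightarrow> W (n - 1 - k') = 0" if "k \<le> n" for k
    using that
  proof (induction k)
    case 0 then show ?case by simp
  next
    case (Suc k)
    then have IH: "\<And>k'. k' < k \<Longrightarrow> W (n - 1 - k') = 0" and k: "k < n" by auto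
    have "(\<Sum>s<n. scale (hh (k + s)) (W s)) = (\<Sum>s<n. if s = n - 1 - k then W s else 0)"
    proof (rule sum.cong[OF refl])
      fix s assume s: "s \<in> {..<n}"
      show "scale (hh (k + s)) (W s) = (if s = n - 1 - k then W s else 0)"
      proof (cases "s < n - 1 - k")
        case True then show ?thesis using hh_low[of "k + s"] by auto
      next
        case False
        show ?thesis
        proof (cases "s = n - 1 - k")
          case True then show ?thesis using hh_top k by simp
        next
          case False
          with \<open>\<not> s < n - 1 - k\<close> s have "n - 1 - s < k" "n - 1 - (n - 1 - s) = s" by auto
          then show ?thesis using IH[of "n - 1 - s"] False by simp
        qed
      qed
    qed
    also have "\<dots> = W (n - 1 - k)" using k by simp
    finally have "W (n - 1 - k) = 0" using assms[OF k] by simp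
    then show ?case using IH less_Suc_eq by auto
  qed
  then have all: "\<And>k. k < n \<Longrightarrow> W (n - 1 - k) = 0" by blast
  fix s assume "s < n"
  then show "W s = 0" using all[of "n - 1 - s"] by simp
qed

lemma ell_mult_expand: "crd (c ^ r * z) (n - 1) = (\<Sum>s<n. crd z s * hh (r + s))"
proof -
  have "c ^ r * z = (\<Sum>s<n. scale (crd z s) (c ^ (r + s)))"
    by (subst expand[of z]) (simp add: sum_distrib_left smult2 power_add)
  then show ?thesis unfolding hh_def by (simp add: crd_sum crd_scale)
qed

lemma ell_nondeg:
  assumes "\<And>r. r < n \<Longrightarrow> crd (c ^ r * z) (n - 1) = 0"
  shows "z = 0"
proof -
  have "emb (crd z s) = 0" if "s < n" for s
  proof (rule tri[OF _ that])
    fix r assume r: "r < n"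
    have "(\<Sum>s<n. scale (hh (r + s)) (emb (crd z s))) = emb (\<Sum>s<n. crd z s * hh (r + s))"
      by (simp add: emb_sum scale_emb mult.commute)
    also have "\<dots> = 0" using assms[OF r] ell_mult_expand by simp
    finally show "(\<Sum>s<n. scale (hh (r + s)) (emb (crd z s))) = 0" .
  qed
  then have "crd z s = 0" if "s < n" for s using emb_inj[of "crd z s" 0] that by simp
  then show ?thesis using crd_eqI[of z 0] crd_zero by simp
qed

end

context SE
begin

definition vl :: "'b \<Rightarrow> 'a \<Rightarrow> nat \<Rightarrow> 'a" where "vl e t = (\<lambda>i. crd 1 i + t * crd e i)"

lemma elt_vl: "elt (vl e t) = 1 + emb t * e"
proof (rule crd_eqI)
  fix k assume k: "k < n"
  show "crd (elt (vl e t)) k = crd (1 + emb t * e) k"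
    using k by (simp add: crd_elt vl_def crd_add crd_emb)
qed

lemma elt_vl0: "elt (vl e 0) = 1" by (simp add: elt_vl)

definition NP :: "'b \<Rightarrow> 'a poly" where "NP e = (SOME P. \<forall>t. Nm (elt (vl e t)) = poly P t)"
definition DP :: "'b \<Rightarrow> 'a poly" where "DP e = (SOME P. \<forall>t. Dd (elt (vl e t)) = poly P t)"
definition IP :: "'b \<Rightarrow> 'b poly" where "IP e = (SOME P. \<forall>t. iota (elt (vl e t)) = poly P (emb t))"
definition AP :: "'b \<Rightarrow> 'b \<Rightarrow> nat \<Rightarrow> 'a poly" where
  "AP e y j = (SOME P. \<forall>t. Cr (\<lambda>j. (c * elt (vl e t) ^ 2) ^ j) (y * iota (elt (vl e t))) j = poly P t)"

lemma NP: "Nm (elt (vl e t)) = poly (NP e) t"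
proof -
  have "\<exists>P. \<forall>t. Nm (elt (vl e t)) = poly P t" unfolding vl_def by (rule pf_line[OF pf_Nm])
  then show ?thesis unfolding NP_def by (rule someI_ex[where P="\<lambda>P. \<forall>t. Nm (elt (vl e t)) = poly P t", THEN spec])
qed

lemma DP: "Dd (elt (vl e t)) = poly (DP e) t"
proof -
  have "\<exists>P. \<forall>t. Dd (elt (vl e t)) = poly P t" unfolding vl_def by (rule pf_line[OF pf_Dd])
  then show ?thesis unfolding DP_def by (rule someI_ex[where P="\<lambda>P. \<forall>t. Dd (elt (vl e t)) = poly P t", THEN spec])
qed

lemma IP: "iota (elt (vl e t)) = poly (IP e) (emb t)"
proof -
  have "\<exists>P. \<forall>t. iota (elt (vl e t)) = poly P (emb t)" unfolding vl_def by (rule pfe_line[OF pfe_iota])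
  then show ?thesis unfolding IP_def by (rule someI_ex[where P="\<lambda>P. \<forall>t. iota (elt (vl e t)) = poly P (emb t)", THEN spec])
qed

lemma AP: assumes j: "j < n"
  shows "Cr (\<lambda>j. (c * elt (vl e t) ^ 2) ^ j) (y * iota (elt (vl e t))) j = poly (AP e y j) t"
proof -
  have pf: "(\<lambda>v. Cr (\<lambda>j. (c * elt v ^ 2) ^ j) (y * iota (elt v)) j) \<in> poly_fun"
    by (intro pf_Cr pfe_mult pfe_pow pfe_elt pfe_const pfe_iota j)
  have "\<exists>P. \<forall>t. Cr (\<lambda>j. (c * elt (vl e t) ^ 2) ^ j) (y * iota (elt (vl e t))) j = poly P t"
    unfolding vl_def by (rule pf_line[OF pf])
  then show ?thesis unfolding AP_def
    by (rule someI_ex[where P="\<lambda>P. \<forall>t. Cr (\<lambda>j. (c * elt (vl e t) ^ 2) ^ j) (y * iota (elt (vl e t))) j = poly P t", THEN spec])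
qed

lemma Mf_id: "Mf (\<lambda>j. c ^ j) = 1\<^sub>m n"
  by (rule eq_matI) (simp_all add: Mf_index crd_cpow Mf_def)

lemma Nm_1: "Nm 1 = 1" unfolding Nm_def using Mf_id by simp
lemma Dd_1: "Dd 1 = 1" unfolding Dd_def using Mf_id by simp

lemma NP0: "coeff (NP e) 0 = 1"
  using NP[of e 0] by (simp add: elt_vl0 Nm_1 poly_0_coeff_0)
lemma DP0: "coeff (DP e) 0 = 1"
  using DP[of e 0] by (simp add: elt_vl0 Dd_1 poly_0_coeff_0)

lemma I1: "[:1, e:] * IP e = map_poly emb (NP e)"
proof (rule poly_emb_eq)
  fix t
  have p1: "poly [:1, e:] (emb t) = elt (vl e t)" by (simp add: elt_vl mult.commute)
  have p2: "poly (IP e) (emb t) = iota (elt (vl e t))" by (simp add: IP)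
  have "poly ([:1, e:] * IP e) (emb t) = elt (vl e t) * iota (elt (vl e t))"
    by (simp only: poly_mult p1 p2)
  also have "\<dots> = emb (Nm (elt (vl e t)))" by (rule b_iota)
  also have "\<dots> = poly (map_poly emb (NP e)) (emb t)" by (simp add: NP poly_emb)
  finally show "poly ([:1, e:] * IP e) (emb t) = poly (map_poly emb (NP e)) (emb t)" .
qed

lemma IP0: "coeff (IP e) 0 = 1"
proof -
  have "coeff ([:1, e:] * IP e) 0 = coeff (map_poly emb (NP e)) 0" by (simp only: I1)
  then show ?thesis by (simp add: coeff_mult_0 coeff_map_poly NP0)
qed

lemma IP1: "coeff (IP e) 1 = emb (coeff (NP e) 1) - e"
proof -
  have "coeff ([:1, e:] * IP e) 1 = coeff (map_poly emb (NP e)) 1" by (simp only: I1)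
  then have "coeff (IP e) 1 + e * coeff (IP e) 0 = emb (coeff (NP e) 1)"
    by (simp add: coeff_mult_1 coeff_map_poly)
  then show ?thesis using IP0 by (simp add: algebra_simps)
qed

end

lemma coeff_mult_S1: "coeff (p * q) (Suc 0) = coeff p 0 * coeff q (Suc 0) + coeff p (Suc 0) * coeff q 0"
  using coeff_mult_1[of p q] by simp

context SE
begin

definition DDP :: "'b \<Rightarrow> 'b poly" where "DDP e = [:c:] * [:1, e:] ^ 2"

lemma DDP_poly: "poly (DDP e) (emb t) = c * elt (vl e t) ^ 2"
  unfolding DDP_def by (simp add: elt_vl mult.commute)

lemma DDP_0: "coeff (DDP e) 0 = c"
  unfolding DDP_def by (simp add: coeff_mult_0 power2_eq_square)

lemma DDP_1: "coeff (DDP e) 1 = emb 2 * c * e"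
proof -
  have "coeff ([:1, e:] ^ 2) 1 = e + e"
    by (simp add: power2_eq_square coeff_mult_S1)
  moreover have "emb 2 = 1 + 1" using emb_add[of 1 1] by simp
  ultimately show ?thesis unfolding DDP_def by (simp add: coeff_mult_S1 coeff_mult_0 algebra_simps)
qed

lemma DDP_pow0: "coeff (DDP e ^ j) 0 = c ^ j"
  by (induction j) (simp_all add: coeff_mult_0 DDP_0)

lemma DDP_pow1: "coeff (DDP e ^ j) 1 = emb (of_nat (2 * j)) * c ^ j * e"
proof (induction j)
  case 0 then show ?case by simp
next
  case (Suc j)
  have "coeff (DDP e ^ Suc j) 1 = c * coeff (DDP e ^ j) 1 + emb 2 * c * e * c ^ j"
    using DDP_1[of e] by (simp add: coeff_mult_S1 DDP_0 DDP_pow0)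
  also have "\<dots> = (emb (of_nat (2 * j)) + emb 2) * (c * c ^ j) * e"
    unfolding Suc by (simp add: algebra_simps)
  also have "emb (of_nat (2 * j)) + emb 2 = emb (of_nat (2 * Suc j))"
  proof -
    have "of_nat (2 * Suc j) = (of_nat (2 * j) + 2 :: 'a)" by simp
    then show ?thesis by (simp only: emb_add)
  qed
  finally show ?case by simp
qed

lemma I2: "(\<Sum>j<n. map_poly emb (AP e y j) * DDP e ^ j) = map_poly emb (DP e) * ([:y:] * IP e)"
proof (rule poly_emb_eq)
  fix t
  define g where "g = (\<lambda>j. (c * elt (vl e t) ^ 2) ^ j)"
  have "poly (\<Sum>j<n. map_poly emb (AP e y j) * DDP e ^ j) (emb t)
      = (\<Sum>j<n. emb (poly (AP e y j) t) * g j)"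
    by (simp add: poly_sum poly_emb DDP_poly g_def)
  also have "\<dots> = (\<Sum>j<n. scale (Cr g (y * iota (elt (vl e t))) j) (g j))"
    by (intro sum.cong refl) (simp add: AP g_def scale_emb)
  also have "\<dots> = scale (det (Mf g)) (y * iota (elt (vl e t)))" by (rule cramer)
  also have "\<dots> = emb (poly (DP e) t) * (y * poly (IP e) (emb t))"
    by (simp add: scale_emb g_def DP[symmetric] Dd_def IP)
  also have "\<dots> = poly (map_poly emb (DP e) * ([:y:] * IP e)) (emb t)"
    by (simp add: poly_emb)
  finally show "poly (\<Sum>j<n. map_poly emb (AP e y j) * DDP e ^ j) (emb t) =
      poly (map_poly emb (DP e) * ([:y:] * IP e)) (emb t)" .
qed

lemma AP0: assumes j: "j < n" shows "coeff (AP e y j) 0 = crd y j"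
proof -
  have "coeff (\<Sum>j<n. map_poly emb (AP e y j) * DDP e ^ j) 0 = coeff (map_poly emb (DP e) * ([:y:] * IP e)) 0"
    by (simp only: I2)
  then have "(\<Sum>j<n. emb (coeff (AP e y j) 0) * c ^ j) = y"
    by (simp add: coeff_sum coeff_mult_0 coeff_map_poly DDP_pow0 DP0 IP0)
  then have "elt (\<lambda>j. coeff (AP e y j) 0) = y" unfolding elt_def by (simp add: scale_emb)
  then show ?thesis using crd_elt[OF j] by metis
qed

definition Ty :: "'b \<Rightarrow> 'b" where
  "Ty y = y + (\<Sum>j<n. scale (of_nat (2 * j) * crd y j) (c ^ j))"

lemma AP1: "coeff (AP e y (n - 1)) 1 =
   (coeff (DP e) 1 + coeff (NP e) 1) * crd y (n - 1) - crd (e * Ty y) (n - 1)"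
proof -
  define X where "X = (\<Sum>j<n. emb (crd y j) * (emb (of_nat (2 * j)) * c ^ j * e))"
  have "coeff (\<Sum>j<n. map_poly emb (AP e y j) * DDP e ^ j) 1 = coeff (map_poly emb (DP e) * ([:y:] * IP e)) 1"
    by (simp only: I2)
  then have "(\<Sum>j<n. emb (coeff (AP e y j) 0) * coeff (DDP e ^ j) 1 + emb (coeff (AP e y j) 1) * c ^ j)
      = y * (coeff (IP e) 1 + emb (coeff (DP e) 1))"
    by (simp add: coeff_sum coeff_mult_0 coeff_mult_S1 coeff_map_poly DDP_pow0 DP0 IP0)
  moreover have "(\<Sum>j<n. emb (coeff (AP e y j) 0) * coeff (DDP e ^ j) 1) = X"
    unfolding X_def by (intro sum.cong refl) (simp only: AP0 DDP_pow1 lessThan_iff)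
  ultimately have "X + (\<Sum>j<n. emb (coeff (AP e y j) 1) * c ^ j) = y * (coeff (IP e) 1 + emb (coeff (DP e) 1))"
    by (simp add: sum.distrib)
  then have "(\<Sum>j<n. emb (coeff (AP e y j) 1) * c ^ j) = y * (emb (coeff (NP e) 1) - e) + emb (coeff (DP e) 1) * y - X"
    unfolding IP1 by (simp add: algebra_simps)
  also have "\<dots> = emb (coeff (DP e) 1 + coeff (NP e) 1) * y - e * Ty y"
  proof -
    have "e * Ty y = e * y + X"
      unfolding Ty_def X_def by (simp add: distrib_left sum_distrib_left scale_emb mult.commute mult.left_commute)
    then show ?thesis by (simp add: algebra_simps)
  qed
  finally have "elt (\<lambda>j. coeff (AP e y j) 1) = emb (coeff (DP e) 1 + coeff (NP e) 1) * y - e * Ty y"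
    unfolding elt_def by (simp add: scale_emb)
  then have "coeff (AP e y (n - 1)) 1 = crd (emb (coeff (DP e) 1 + coeff (NP e) 1) * y - e * Ty y) (n - 1)"
  proof -
    have "n - 1 < n" using n_pos by simp
    from crd_elt[OF this, of "\<lambda>j. coeff (AP e y j) 1"] show ?thesis
      unfolding \<open>elt (\<lambda>j. coeff (AP e y j) 1) = _\<close> by simp
  qed
  then show ?thesis by (simp add: crd_diff crd_emb del: emb_add)
qed

end

definition qq :: "(nat \<Rightarrow> nat \<Rightarrow> 'a::field) \<Rightarrow> nat \<Rightarrow> (nat \<Rightarrow> 'a) \<Rightarrow> 'a" where
  "qq Q m u = (\<Sum>a<m. \<Sum>b<m. Q a b * u a * u b)"
definition BB :: "(nat \<Rightarrow> nat \<Rightarrow> 'a::field) \<Rightarrow> nat \<Rightarrow> (nat \<Rightarrow> 'a) \<Rightarrow> (nat \<Rightarrow> 'a) \<Rightarrow> 'a" where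
  "BB Q m u w = (\<Sum>a<m. \<Sum>b<m. Q a b * (u a * w b + w a * u b))"
definition PP :: "(nat \<Rightarrow> nat \<Rightarrow> 'a::field) \<Rightarrow> nat \<Rightarrow> (nat \<Rightarrow> 'a) \<Rightarrow> nat \<Rightarrow> 'a" where
  "PP Q m u b = (\<Sum>a<m. (Q a b + Q b a) * u a)"

lemma BB_PP: "BB Q m u w = (\<Sum>b<m. w b * PP Q m u b)"
proof -
  have "BB Q m u w = (\<Sum>a<m. \<Sum>b<m. Q a b * u a * w b) + (\<Sum>a<m. \<Sum>b<m. Q a b * w a * u b)"
    unfolding BB_def by (simp add: algebra_simps sum.distrib)
  also have "(\<Sum>a<m. \<Sum>b<m. Q a b * u a * w b) = (\<Sum>b<m. \<Sum>a<m. Q a b * u a * w b)"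
    by (rule sum.swap)
  also have "(\<Sum>b<m. \<Sum>a<m. Q a b * u a * w b) + (\<Sum>a<m. \<Sum>b<m. Q a b * w a * u b)
      = (\<Sum>b<m. \<Sum>a<m. Q a b * u a * w b + Q b a * w b * u a)"
    by (simp add: sum.distrib)
  also have "\<dots> = (\<Sum>b<m. w b * PP Q m u b)"
    unfolding PP_def by (simp add: sum_distrib_left algebra_simps)
  finally show ?thesis .
qed

lemma qq_diff: "qq Q m (\<lambda>a. \<alpha> * u a - w a) = \<alpha>^2 * qq Q m u - \<alpha> * BB Q m u w + qq Q m w"
  unfolding qq_def BB_def
  by (simp add: algebra_simps power2_eq_square sum.distrib sum_subtractf sum_distrib_left)

lemma BB_diff: "BB Q m u (\<lambda>a. \<alpha> * u a - w a) = 2 * \<alpha> * qq Q m u - BB Q m u w"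
  unfolding qq_def BB_def
  by (simp add: algebra_simps sum.distrib sum_subtractf sum_distrib_left)

lemma qq_add: "qq Q m (\<lambda>a. u a + w a) = qq Q m u + qq Q m w + BB Q m u w"
  unfolding qq_def BB_def
  by (simp add: algebra_simps sum.distrib)

lemma BB_three: "(\<Sum>a<m. \<Sum>b<m. Q a b * (u a * r b + s a * s b + r a * u b)) = BB Q m u r + qq Q m s"
  unfolding qq_def BB_def
  by (simp add: algebra_simps sum.distrib)

lemma coeff_mult_S2: "coeff (p * q) (Suc (Suc 0)) = coeff p 0 * coeff q (Suc (Suc 0)) + coeff p (Suc 0) * coeff q (Suc 0) + coeff p (Suc (Suc 0)) * coeff q 0"
  using coeff_mult_2[of p q] by (simp add: numeral_2_eq_2)

context SE
begin

lemma crd_Ty: assumes s: "s < n" shows "crd (Ty y) s = (1 + of_nat (2 * s)) * crd y s"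
proof -
  have "crd (\<Sum>j<n. scale (of_nat (2 * j) * crd y j) (c ^ j)) s = (\<Sum>j<n. if j = s then of_nat (2 * j) * crd y j else 0)"
    by (simp add: crd_sum crd_scale crd_cpow s if_distrib cong: if_cong)
  also have "\<dots> = of_nat (2 * s) * crd y s" using s by simp
  finally show ?thesis unfolding Ty_def by (simp add: crd_add algebra_simps)
qed

lemma Ty_lin: "Ty (\<Sum>b\<in>A. scale (p b) (X b)) = (\<Sum>b\<in>A. scale (p b) (Ty (X b)))"
proof (rule crd_eqI)
  fix s assume s: "s < n"
  show "crd (Ty (\<Sum>b\<in>A. scale (p b) (X b))) s = crd (\<Sum>b\<in>A. scale (p b) (Ty (X b))) s"
    by (simp add: crd_Ty[OF s] crd_sum crd_scale sum_distrib_left algebra_simps)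
qed

lemma Ty_inj: assumes "Ty z = 0" shows "z = 0"
proof (rule crd_eqI)
  fix s assume s: "s < n"
  have "(1 + of_nat (2 * s)) * crd z s = 0" using crd_Ty[OF s, of z] assms crd_zero by simp
  moreover have "(1 + of_nat (2 * s) :: 'a) \<noteq> 0"
  proof
    assume "(1 + of_nat (2 * s) :: 'a) = 0"
    then have "(of_nat (1 + 2 * s) :: 'a) = of_nat 0" by simp
    then show False by (simp only: of_nat_eq_iff)
  qed
  ultimately show "crd z s = crd 0 s" by (simp add: crd_zero)
qed

lemma LT:
  assumes "\<And>e. (\<Sum>b<m. p b * crd (e * Ty (x b)) (n - 1)) = 0"
  shows "(\<Sum>b<m. scale (p b) (x b)) = 0"
proof -
  define z where "z = (\<Sum>b<m. scale (p b) (x b))"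
  have "crd (e * Ty z) (n - 1) = 0" for e
  proof -
    have "crd (e * Ty z) (n - 1) = crd (\<Sum>b<m. scale (p b) (e * Ty (x b))) (n - 1)"
      unfolding z_def Ty_lin by (simp add: sum_distrib_left smult2)
    also have "\<dots> = (\<Sum>b<m. p b * crd (e * Ty (x b)) (n - 1))" by (simp add: crd_sum crd_scale)
    finally show ?thesis using assms by simp
  qed
  then have "Ty z = 0" by (intro ell_nondeg) simp
  then show ?thesis unfolding z_def by (rule Ty_inj)
qed

lemma coeff_facts:
  fixes e :: 'b and x :: "nat \<Rightarrow> 'b" and Q :: "nat \<Rightarrow> nat \<Rightarrow> 'a" and m :: nat
  assumes hypU: "\<forall>b. b \<in> units \<and> primitive scale n (c * b ^ 2) \<longrightarrow>
      qform Q m (\<lambda>i. top_coeff scale n (x i * uinv b) (c * b ^ 2)) = 0"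
  defines "v0 \<equiv> (\<lambda>a. crd (x a) (n - 1))"
  defines "r1 \<equiv> (\<lambda>a. (coeff (DP e) 1 + coeff (NP e) 1) * v0 a - crd (e * Ty (x a)) (n - 1))"
  defines "r2 \<equiv> (\<lambda>a. coeff (AP e (x a) (n - 1)) 2)"
  shows "qq Q m v0 = 0" "BB Q m v0 r1 = 0" "BB Q m v0 r2 + qq Q m r1 = 0"
    "\<And>u. (\<Sum>a<m. scale (u a) (x a)) = 0 \<Longrightarrow> (\<Sum>a<m. u a * r2 a) = 0"
proof -
  define RP where "RP a = AP e (x a) (n - 1)" for a
  define qp where "qp = (\<Sum>a<m. \<Sum>b<m. smult (Q a b) (RP a * RP b))"
  have nn: "n - 1 < n" using n_pos by simp
  have RP: "poly (RP a) t = Gy (elt (vl e t)) (x a)" for a t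
    unfolding RP_def Gy_def using AP[OF nn, of e t "x a"] by simp
  have Z: "finite {t. poly (NP e * DP e) t = 0}"
  proof (rule poly_roots_finite)
    have "coeff (NP e * DP e) 0 = 1" by (simp add: coeff_mult_0 NP0 DP0)
    then show "NP e * DP e \<noteq> 0" by auto
  qed
  have "qp = 0"
  proof (rule poly_zero_cofinite[OF Z])
    fix t assume "t \<notin> {t. poly (NP e * DP e) t = 0}"
    then have N: "Nm (elt (vl e t)) \<noteq> 0" and D: "Dd (elt (vl e t)) \<noteq> 0" by (auto simp: NP DP)
    define bl where "bl = elt (vl e t)"
    have bu: "bl \<in> units" unfolding bl_def by (rule Nm_unit[OF N])
    have pr: "primitive scale n (c * bl ^ 2)" using V_iff[OF bu] D unfolding bl_def by simp
    have hq: "qform Q m (\<lambda>i. top_coeff scale n (x i * uinv bl) (c * bl ^ 2)) = 0"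
      using hypU bu pr by blast
    have "qform Q m (\<lambda>i. Gy bl (x i) / (Nm bl * Dd bl)) = 0"
      using hq top_formula[OF bu] D unfolding bl_def by simp
    then have "qform Q m (\<lambda>i. Gy bl (x i)) = 0" unfolding qform_div using N D unfolding bl_def by simp
    then show "poly qp t = 0" unfolding qp_def qform_def
      by (simp add: poly_sum RP bl_def algebra_simps)
  qed
  have cq: "coeff qp k = (\<Sum>a<m. \<Sum>b<m. Q a b * coeff (RP a * RP b) k)" for k
    unfolding qp_def by (simp add: coeff_sum)
  have r0: "coeff (RP a) 0 = v0 a" for a unfolding RP_def v0_def by (rule AP0[OF nn])
  have r1: "coeff (RP a) (Suc 0) = r1 a" for a unfolding RP_def r1_def v0_def using AP1[of e "x a"] by simp
  have r2: "coeff (RP a) (Suc (Suc 0)) = r2 a" for a unfolding RP_def r2_def by (simp add: numeral_2_eq_2)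
  show "qq Q m v0 = 0" using cq[of 0] \<open>qp = 0\<close> unfolding qq_def by (simp add: coeff_mult_0 r0 mult.assoc)
  show "BB Q m v0 r1 = 0" using cq[of "Suc 0"] \<open>qp = 0\<close> unfolding BB_def by (simp add: coeff_mult_S1 r0 r1 algebra_simps)
  have "(\<Sum>a<m. \<Sum>b<m. Q a b * (v0 a * r2 b + r1 a * r1 b + r2 a * v0 b)) = 0"
    using cq[of "Suc (Suc 0)"] \<open>qp = 0\<close> by (simp add: coeff_mult_S2 r0 r1 r2)
  then show "BB Q m v0 r2 + qq Q m r1 = 0" by (simp add: BB_three)
  fix u assume u: "(\<Sum>a<m. scale (u a) (x a)) = 0"
  have "(\<Sum>a<m. smult (u a) (RP a)) = 0"
  proof -
    have "poly (\<Sum>a<m. smult (u a) (RP a)) t = 0" for t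
    proof -
      define g where "g = (\<lambda>j. (c * elt (vl e t) ^ 2) ^ j)"
      have "poly (\<Sum>a<m. smult (u a) (RP a)) t = (\<Sum>a<m. u a * Cr g (x a * iota (elt (vl e t))) (n - 1))"
        by (simp add: poly_sum RP Gy_def g_def)
      also have "\<dots> = Cr g (\<Sum>a<m. scale (u a) (x a * iota (elt (vl e t)))) (n - 1)"
        by (simp add: Cr_sum Cr_scale)
      also have "(\<Sum>a<m. scale (u a) (x a * iota (elt (vl e t)))) = (\<Sum>a<m. scale (u a) (x a)) * iota (elt (vl e t))"
        by (simp add: sum_distrib_right smult)
      also have "\<dots> = scale 0 0" using u by simp
      also have "Cr g (scale 0 0) (n - 1) = 0" by (simp only: Cr_scale) simp
      finally show ?thesis .
    qed
    then show ?thesis using poly_all_0_iff_0 by blast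
  qed
  then have "coeff (\<Sum>a<m. smult (u a) (RP a)) (Suc (Suc 0)) = 0" by simp
  then show "(\<Sum>a<m. u a * r2 a) = 0" by (simp add: coeff_sum r2)
qed

end

context SE
begin

lemma key:
  fixes x :: "nat \<Rightarrow> 'b" and Q :: "nat \<Rightarrow> nat \<Rightarrow> 'a" and m :: nat
  assumes hypU: "\<forall>b. b \<in> units \<and> primitive scale n (c * b ^ 2) \<longrightarrow>
      qform Q m (\<lambda>i. top_coeff scale n (x i * uinv b) (c * b ^ 2)) = 0"
  shows "qformS scale Q m x = 0"
proof -
  define v0 where "v0 = (\<lambda>a. crd (x a) (n - 1))"
  define w where "w e = (\<lambda>a. crd (e * Ty (x a)) (n - 1))" for e
  define D1 where "D1 e = coeff (DP e) 1 + coeff (NP e) 1" for e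
  note cf = coeff_facts[where x=x and Q=Q and m=m, OF hypU]
  have q0: "qq Q m v0 = 0" using cf(1) unfolding v0_def .
  have r1eq: "(\<lambda>a. D1 e * v0 a - crd (e * Ty (x a)) (n - 1)) = (\<lambda>a. D1 e * v0 a - w e a)" for e
    unfolding w_def ..
  have Bw: "BB Q m v0 (w e) = 0" for e
  proof -
    have "BB Q m v0 (\<lambda>a. D1 e * v0 a - w e a) = 0" using cf(2)[of e] unfolding D1_def w_def v0_def .
    then show ?thesis unfolding BB_diff q0 by simp
  qed
  have pz: "(\<Sum>b<m. scale (PP Q m v0 b) (x b)) = 0"
  proof (rule LT)
    fix e show "(\<Sum>b<m. PP Q m v0 b * crd (e * Ty (x b)) (n - 1)) = 0"
      using Bw[of e] unfolding BB_PP w_def by (simp add: mult.commute)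
  qed
  have qw: "qq Q m (w e) = 0" for e
  proof -
    have "(\<Sum>a<m. PP Q m v0 a * coeff (AP e (x a) (n - 1)) 2) = 0" by (rule cf(4)[OF pz])
    then have "BB Q m v0 (\<lambda>a. coeff (AP e (x a) (n - 1)) 2) = 0" unfolding BB_PP by (simp add: mult.commute)
    then have "qq Q m (\<lambda>a. D1 e * v0 a - w e a) = 0" using cf(3)[of e] unfolding D1_def w_def v0_def by simp
    then show ?thesis unfolding qq_diff q0 Bw by simp
  qed
  have wadd: "w (e + e') = (\<lambda>a. w e a + w e' a)" for e e'
    unfolding w_def by (simp add: distrib_right crd_add)
  have Bww: "BB Q m (w e) (w e') = 0" for e e'
    using qw[of "e + e'"] unfolding wadd qq_add qw by simp
  have P2: "(\<Sum>b<m. scale (PP Q m (w e) b) (x b)) = 0" for e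
  proof (rule LT)
    fix e' show "(\<Sum>b<m. PP Q m (w e) b * crd (e' * Ty (x b)) (n - 1)) = 0"
      using Bww[of e e'] unfolding BB_PP w_def by (simp add: mult.commute)
  qed
  define z where "z a = (\<Sum>b<m. scale (Q a b + Q b a) (x b))" for a
  have zw: "(\<Sum>a<m. scale (w e a) (z a)) = 0" for e
  proof -
    have "(\<Sum>a<m. scale (w e a) (z a)) = (\<Sum>a<m. \<Sum>b<m. scale (w e a * (Q a b + Q b a)) (x b))"
      unfolding z_def by (simp add: scale_sum_right)
    also have "\<dots> = (\<Sum>b<m. \<Sum>a<m. scale (w e a * (Q a b + Q b a)) (x b))" by (rule sum.swap)
    also have "\<dots> = (\<Sum>b<m. scale (PP Q m (w e) b) (x b))"
      unfolding PP_def by (simp add: scale_sum_left mult.commute)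
    finally show ?thesis using P2 by simp
  qed
  define WW where "WW s = (\<Sum>a<m. scale ((1 + of_nat (2 * s)) * crd (x a) s) (z a))" for s
  have WW0: "WW s = 0" if s: "s < n" for s
  proof (rule tri[OF _ s])
    fix r assume r: "r < n"
    have "(\<Sum>s<n. scale (hh (r + s)) (WW s)) = (\<Sum>s<n. \<Sum>a<m. scale (hh (r + s) * ((1 + of_nat (2 * s)) * crd (x a) s)) (z a))"
      unfolding WW_def by (simp add: scale_sum_right)
    also have "\<dots> = (\<Sum>a<m. \<Sum>s<n. scale (hh (r + s) * ((1 + of_nat (2 * s)) * crd (x a) s)) (z a))"
      by (rule sum.swap)
    also have "\<dots> = (\<Sum>a<m. scale (w (c ^ r) a) (z a))"
    proof (rule sum.cong[OF refl])
      fix a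
      have "w (c ^ r) a = (\<Sum>s<n. crd (Ty (x a)) s * hh (r + s))" unfolding w_def by (rule ell_mult_expand)
      also have "\<dots> = (\<Sum>s<n. hh (r + s) * ((1 + of_nat (2 * s)) * crd (x a) s))"
        by (intro sum.cong refl) (simp add: crd_Ty mult.commute)
      finally show "(\<Sum>s<n. scale (hh (r + s) * ((1 + of_nat (2 * s)) * crd (x a) s)) (z a)) = scale (w (c ^ r) a) (z a)"
        by (simp add: scale_sum_left)
    qed
    also have "\<dots> = 0" by (rule zw)
    finally show "(\<Sum>s<n. scale (hh (r + s)) (WW s)) = 0" .
  qed
  have Xs: "(\<Sum>a<m. scale (crd (x a) s) (z a)) = 0" if s: "s < n" for s
  proof -
    have ne: "(1 + of_nat (2 * s) :: 'a) \<noteq> 0"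
    proof
      assume "(1 + of_nat (2 * s) :: 'a) = 0"
      then have "(of_nat (1 + 2 * s) :: 'a) = of_nat 0" by simp
      then show False by (simp only: of_nat_eq_iff)
    qed
    have "WW s = scale (1 + of_nat (2 * s)) (\<Sum>a<m. scale (crd (x a) s) (z a))"
      unfolding WW_def by (simp add: scale_sum_right)
    then have "scale (1 + of_nat (2 * s)) (\<Sum>a<m. scale (crd (x a) s) (z a)) = 0" using WW0[OF s] by simp
    then show ?thesis using ne by simp
  qed
  have "(\<Sum>a<m. x a * z a) = (\<Sum>a<m. (\<Sum>s<n. scale (crd (x a) s) (c ^ s)) * z a)"
    by (subst expand) (rule refl)
  also have "\<dots> = (\<Sum>a<m. \<Sum>s<n. c ^ s * scale (crd (x a) s) (z a))"
  proof (rule sum.cong[OF refl])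
    fix a
    have "(\<Sum>s<n. scale (crd (x a) s) (c ^ s)) * z a = (\<Sum>s<n. scale (crd (x a) s) (c ^ s) * z a)"
      by (rule sum_distrib_right)
    also have "\<dots> = (\<Sum>s<n. c ^ s * scale (crd (x a) s) (z a))"
      by (intro sum.cong refl) (simp only: smult[symmetric] smult2[symmetric])
    finally show "(\<Sum>s<n. scale (crd (x a) s) (c ^ s)) * z a = (\<Sum>s<n. c ^ s * scale (crd (x a) s) (z a))" .
  qed
  also have "\<dots> = (\<Sum>s<n. c ^ s * (\<Sum>a<m. scale (crd (x a) s) (z a)))"
    by (subst sum.swap) (simp add: sum_distrib_left)
  also have "\<dots> = 0" using Xs by simp
  finally have xz: "(\<Sum>a<m. x a * z a) = 0" .
  have "(\<Sum>a<m. x a * z a) = (\<Sum>a<m. \<Sum>b<m. scale (Q a b) (x a * x b)) + (\<Sum>a<m. \<Sum>b<m. scale (Q b a) (x a * x b))"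
    unfolding z_def by (simp add: sum_distrib_left smult2 scale_left_distrib sum.distrib distrib_left)
  also have "(\<Sum>a<m. \<Sum>b<m. scale (Q b a) (x a * x b)) = (\<Sum>b<m. \<Sum>a<m. scale (Q b a) (x a * x b))"
    by (rule sum.swap)
  also have "\<dots> = (\<Sum>a<m. \<Sum>b<m. scale (Q a b) (x a * x b))"
  proof -
    have xx: "x b * x a = x a * x b" for a b by (rule mult.commute)
    show ?thesis by (simp only: xx)
  qed
  finally have "qformS scale Q m x + qformS scale Q m x = 0" unfolding qformS_def using xz by simp
  moreover have "scale (1 + 1) (qformS scale Q m x) = qformS scale Q m x + qformS scale Q m x"
    by (simp only: scale_left_distrib scale_one)
  ultimately have "scale (1 + 1) (qformS scale Q m x) = 0" by simp
  moreover have "(1 + 1 :: 'a) \<noteq> 0" by simp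
  ultimately show ?thesis by simp
qed

end

theorem theorem3p11:
  fixes scale :: "'a::field_char_0 \<Rightarrow> 'b::comm_ring_1 \<Rightarrow> 'b"
    and n m :: nat and c :: 'b and Q :: "nat \<Rightarrow> nat \<Rightarrow> 'a" and x :: "nat \<Rightarrow> 'b"
  assumes "k_algebra scale"
    and "primitive scale n c"
    and "regular_qform Q m"
    and "qformS scale Q m x \<noteq> 0"
  defines "V \<equiv> {b \<in> units. primitive scale n (c * b ^ 2)}"
  defines "U \<equiv> {b \<in> V. qform Q m (\<lambda>i. top_coeff scale n (x i * uinv b) (c * b ^ 2)) \<noteq> 0}"
  shows "U \<noteq> {} \<and> open_in_units scale n c U"
proof -
  interpret SE scale n c using assms(1,2) by unfold_locales
  have op: "open_in_units scale n c U" unfolding U_def V_def by (rule openness)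
  have ne: "U \<noteq> {}"
  proof
    assume "U = {}"
    then have "\<forall>b. b \<in> units \<and> primitive scale n (c * b ^ 2) \<longrightarrow>
      qform Q m (\<lambda>i. top_coeff scale n (x i * uinv b) (c * b ^ 2)) = 0"
      unfolding U_def V_def by auto
    then have "qformS scale Q m x = 0" by (rule key)
    with assms(4) show False by simp
  qed
  show ?thesis using ne op by simp
qed

end
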